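(* Every rigid reduced QP $(A,S)$ is $2$-acyclic, i.e. for every pair of vertices $i\ne j$, $A_{i,j}=0$ or $A_{j,i}=0$.
   Context: Fix a field $K$; quiver $Q$ with vertices $Q_0$; $R=K^{Q_0}$; arrow span $A$, $A_{i,j}=e_iAe_j$ spanned by arrows $j\to i$. Complete path algebra $R\langle\langle A\rangle\rangle=\prod_{d\ge0}A^d$, $\mathfrak m=\prod_{d\ge1}A^d$, $\mathfrak m$-adic topology. Potentials: linear combinations of cyclic paths; cyclic equivalence: difference in the closure of the span of $a_1\cdots a_d-a_2\cdots a_da_1$. $\partial_\xi(a_1\cdots a_d)=\sum_k\xi(a_k)a_{k+1}\cdots a_da_1\cdots a_{k-1}$ for $\xi\in A^\star$; $J(S)$ closure of the ideal generated by all $\partial_\xi S$; $\mathcal P(A,S)=R\langle\langle A\rangle\rangle/J(S)$. QP: no loops, no two cyclically equivalent cyclic paths in $S$; reduced if $S\in\mathfrak m^3$. For a topological algebra $U$, $\mathrm{Tr}(U)=U/\{U,U\}$ with $\{U,U\}$ the closure of the span of commutators. $(A,S)$ is rigid if $\mathrm{Tr}(\mathcal P(A,S))$ equals the image of $R$ (equivalently, every potential on $A$ is cyclically equivalent to an element of $J(S)$). *)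

theory Defs
  imports Main
begin

text \<open>
A quiver is given by a finite vertex type 'v, a finite set Q1 of arrows, and
source / target maps src, tgt.  An arrow a with src a = j, tgt a = i spans A_{i,j}.
A path a_1 ... a_d (product in the algebra, composable iff src a_k = tgt a_{k+1})
is represented as a pair (v, [a_1,...,a_d]) where v is its starting vertex
(v = src a_d); the trivial path e_v is (v, []).  Elements of the complete path
algebra R<<A>> are functions from such pairs to the field, vanishing off valid paths
(arbitrary, possibly infinite, formal linear combinations of paths).
\<close>

type_synonym ('v, 'a) qpath = "'v \<times> 'a list"

definition composable :: "('a \<Rightarrow> 'v) \<Rightarrow> ('a \<Rightarrow> 'v) \<Rightarrow> 'a list \<Rightarrow> bool" where
  "composable src tgt as \<longleftrightarrow> (\<forall>k. Suc k < length as \<longrightarrow> src (as ! k) = tgt (as ! Suc k))"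

definition is_path :: "'a set \<Rightarrow> ('a \<Rightarrow> 'v) \<Rightarrow> ('a \<Rightarrow> 'v) \<Rightarrow> ('v, 'a) qpath \<Rightarrow> bool" where
  "is_path Q1 src tgt p \<longleftrightarrow> set (snd p) \<subseteq> Q1 \<and> composable src tgt (snd p)
      \<and> (snd p \<noteq> [] \<longrightarrow> src (last (snd p)) = fst p)"

definition path_tgt :: "('a \<Rightarrow> 'v) \<Rightarrow> ('v, 'a) qpath \<Rightarrow> 'v" where
  "path_tgt tgt p = (if snd p = [] then fst p else tgt (hd (snd p)))"

definition is_cyclic_path :: "'a set \<Rightarrow> ('a \<Rightarrow> 'v) \<Rightarrow> ('a \<Rightarrow> 'v) \<Rightarrow> ('v, 'a) qpath \<Rightarrow> bool" where
  "is_cyclic_path Q1 src tgt p \<longleftrightarrow> is_path Q1 src tgt p \<and> snd p \<noteq> [] \<and> path_tgt tgt p = fst p"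

definition elt :: "'a set \<Rightarrow> ('a \<Rightarrow> 'v) \<Rightarrow> ('a \<Rightarrow> 'v) \<Rightarrow> (('v, 'a) qpath \<Rightarrow> 'k::field) \<Rightarrow> bool" where
  "elt Q1 src tgt f \<longleftrightarrow> (\<forall>p. \<not> is_path Q1 src tgt p \<longrightarrow> f p = 0)"

text \<open>Multiplication: (u,p1)(v,p2) = (v, p1 @ p2) if u = target of (v,p2), else 0.\<close>
definition pmult :: "('a \<Rightarrow> 'v) \<Rightarrow> (('v, 'a) qpath \<Rightarrow> 'k::field) \<Rightarrow> (('v, 'a) qpath \<Rightarrow> 'k) \<Rightarrow> ('v, 'a) qpath \<Rightarrow> 'k" where
  "pmult tgt f g p = (\<Sum>k\<in>{0..length (snd p)}.
      f (path_tgt tgt (fst p, drop k (snd p)), take k (snd p)) * g (fst p, drop k (snd p)))"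

definition pathvec :: "('v, 'a) qpath \<Rightarrow> ('v, 'a) qpath \<Rightarrow> 'k::field" where
  "pathvec p = (\<lambda>q. if q = p then 1 else 0)"

fun rot :: "('a \<Rightarrow> 'v) \<Rightarrow> ('v, 'a) qpath \<Rightarrow> ('v, 'a) qpath" where
  "rot src (v, []) = (v, [])"
| "rot src (v, a # as) = (src a, as @ [a])"

inductive_set kspan :: "((('v, 'a) qpath \<Rightarrow> 'k::field) set) \<Rightarrow> (('v, 'a) qpath \<Rightarrow> 'k) set"
  for X where
  zero: "(\<lambda>p. 0) \<in> kspan X"
| smult: "x \<in> X \<Longrightarrow> (\<lambda>p. c * x p) \<in> kspan X"
| add: "x \<in> kspan X \<Longrightarrow> y \<in> kspan X \<Longrightarrow> (\<lambda>p. x p + y p) \<in> kspan X"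

text \<open>Closure in the m-adic topology: f lies in the closure of U iff for every n
  some u in U agrees with f modulo m^n, i.e. on all paths of length < n.\<close>
definition mclosure :: "(('v, 'a) qpath \<Rightarrow> 'k) set \<Rightarrow> (('v, 'a) qpath \<Rightarrow> 'k) set" where
  "mclosure U = {f. \<forall>n. \<exists>u\<in>U. \<forall>p. length (snd p) < n \<longrightarrow> f p = u p}"

inductive_set ideal_gen :: "'a set \<Rightarrow> ('a \<Rightarrow> 'v) \<Rightarrow> ('a \<Rightarrow> 'v) \<Rightarrow>
    ((('v, 'a) qpath \<Rightarrow> 'k::field) set) \<Rightarrow> (('v, 'a) qpath \<Rightarrow> 'k) set"
  for Q1 src tgt G where
  zero: "(\<lambda>p. 0) \<in> ideal_gen Q1 src tgt G"
| gen: "g \<in> G \<Longrightarrow> elt Q1 src tgt u \<Longrightarrow> elt Q1 src tgt w \<Longrightarrow>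
        pmult tgt (pmult tgt u g) w \<in> ideal_gen Q1 src tgt G"
| add: "x \<in> ideal_gen Q1 src tgt G \<Longrightarrow> y \<in> ideal_gen Q1 src tgt G \<Longrightarrow>
        (\<lambda>p. x p + y p) \<in> ideal_gen Q1 src tgt G"

definition potential :: "'a set \<Rightarrow> ('a \<Rightarrow> 'v) \<Rightarrow> ('a \<Rightarrow> 'v) \<Rightarrow> (('v, 'a) qpath \<Rightarrow> 'k::field) \<Rightarrow> bool" where
  "potential Q1 src tgt S \<longleftrightarrow> (\<forall>p. S p \<noteq> 0 \<longrightarrow> is_cyclic_path Q1 src tgt p)"

definition cyc_equiv :: "'a set \<Rightarrow> ('a \<Rightarrow> 'v) \<Rightarrow> ('a \<Rightarrow> 'v) \<Rightarrow> (('v, 'a) qpath \<Rightarrow> 'k::field) \<Rightarrow> (('v, 'a) qpath \<Rightarrow> 'k) \<Rightarrow> bool" where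
  "cyc_equiv Q1 src tgt S S' \<longleftrightarrow>
     (\<lambda>p. S p - S' p) \<in> mclosure (kspan {(\<lambda>q. pathvec c q - pathvec (rot src c) q) | c. is_cyclic_path Q1 src tgt c})"

text \<open>Cyclic derivative \<partial>_\<xi> S for \<xi> \<in> A^*, given by the values \<xi> a on the arrow basis.
  The coefficient of a path q collects all (cycle, position) pairs: the cycles
  rotate j (a # q), j < length (a # q), where a is the deleted arrow.\<close>
definition cyc_deriv :: "'a set \<Rightarrow> ('a \<Rightarrow> 'v) \<Rightarrow> ('a \<Rightarrow> 'v) \<Rightarrow> ('a \<Rightarrow> 'k::field) \<Rightarrow> (('v, 'a) qpath \<Rightarrow> 'k) \<Rightarrow> ('v, 'a) qpath \<Rightarrow> 'k" where
  "cyc_deriv Q1 src tgt \<xi> S q =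
     (if is_path Q1 src tgt q then
        (\<Sum>a\<in>{a\<in>Q1. src a = path_tgt tgt q \<and> tgt a = fst q}.
           \<xi> a * (\<Sum>j<Suc (length (snd q)).
              S (let l = rotate j (a # snd q) in (src (last l), l))))
      else 0)"

definition jacobian_ideal :: "'a set \<Rightarrow> ('a \<Rightarrow> 'v) \<Rightarrow> ('a \<Rightarrow> 'v) \<Rightarrow> (('v, 'a) qpath \<Rightarrow> 'k::field) \<Rightarrow> (('v, 'a) qpath \<Rightarrow> 'k) set" where
  "jacobian_ideal Q1 src tgt S = mclosure (ideal_gen Q1 src tgt {cyc_deriv Q1 src tgt \<xi> S | \<xi>. True})"

definition is_QP :: "'a set \<Rightarrow> ('a \<Rightarrow> 'v) \<Rightarrow> ('a \<Rightarrow> 'v) \<Rightarrow> (('v, 'a) qpath \<Rightarrow> 'k::field) \<Rightarrow> bool" where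
  "is_QP Q1 src tgt S \<longleftrightarrow> (\<forall>a\<in>Q1. src a \<noteq> tgt a) \<and> potential Q1 src tgt S \<and>
     (\<forall>c c'. S c \<noteq> 0 \<longrightarrow> S c' \<noteq> 0 \<longrightarrow> (\<exists>k. snd c' = rotate k (snd c)) \<longrightarrow> c = c')"

definition reduced :: "(('v, 'a) qpath \<Rightarrow> 'k::field) \<Rightarrow> bool" where
  "reduced S \<longleftrightarrow> (\<forall>p. length (snd p) < 3 \<longrightarrow> S p = 0)"

definition rigid :: "'a set \<Rightarrow> ('a \<Rightarrow> 'v) \<Rightarrow> ('a \<Rightarrow> 'v) \<Rightarrow> (('v, 'a) qpath \<Rightarrow> 'k::field) \<Rightarrow> bool" where
  "rigid Q1 src tgt S \<longleftrightarrow>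
     (\<forall>P. potential Q1 src tgt (P :: ('v, 'a) qpath \<Rightarrow> 'k) \<longrightarrow>
        (\<exists>J\<in>jacobian_ideal Q1 src tgt S. cyc_equiv Q1 src tgt P J))"

end

theory Submission
  imports Defs
begin

lemma deriv_vanish:
  assumes noloop: "\<forall>a\<in>Q1. src a \<noteq> tgt a" and red: "reduced S"
  shows "length (snd q) < 2 \<or> path_tgt tgt q = fst q \<Longrightarrow> cyc_deriv Q1 src tgt \<xi> S q = 0"
proof -
  assume h: "length (snd q) < 2 \<or> path_tgt tgt q = fst q"
  show ?thesis
  proof (cases "path_tgt tgt q = fst q")
    case True
    have E: "{a\<in>Q1. src a = path_tgt tgt q \<and> tgt a = fst q} = {}" using noloop True by auto
    show ?thesis unfolding cyc_deriv_def E by simp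
  next
    case False
    with h have l: "length (snd q) < 2" by simp
    have "\<And>a j. S (let l = rotate j (a # snd q) in (src (last l), l)) = 0"
      using red l unfolding reduced_def Let_def by simp
    then show ?thesis unfolding cyc_deriv_def by simp
  qed
qed

lemma pmult_vanish:
  assumes H: "\<forall>q. length (snd q) < 2 \<longrightarrow> g q = 0" and gp: "g (v, [x, y]) = 0"
    and pt: "path_tgt tgt (v, [x,y]) = v"
  shows "pmult tgt (pmult tgt u g) w (v, [x, y]) = 0"
proof -
  have s3: "{0..Suc (Suc 0)} = {0, Suc 0, Suc (Suc 0)}" by auto
  have s2: "{0..Suc 0} = {0, Suc 0}" by auto
  have e: "path_tgt tgt (v, []) = v" by (simp add: path_tgt_def)
  show ?thesis
    unfolding pmult_def using H gp e
    by (simp add: s3 s2 numeral_2_eq_2)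
qed

lemma ideal_vanish:
  assumes "x \<in> ideal_gen Q1 src tgt G"
    and G: "\<forall>g\<in>G. (\<forall>q. length (snd q) < 2 \<longrightarrow> g q = 0) \<and> g (v, [a, b]) = 0"
    and pt: "path_tgt tgt (v, [a,b]) = v"
  shows "x (v, [a, b]) = 0"
  using assms(1)
proof induction
  case zero then show ?case by simp
next
  case (gen g u w)
  then show ?case using G pmult_vanish[OF _ _ pt] by blast
next
  case (add x y) then show ?case by simp
qed

theorem proposition8p1:
  fixes Q1 :: "'a set" and src tgt :: "'a \<Rightarrow> 'v::finite"
    and S :: "('v, 'a) qpath \<Rightarrow> 'k::field"
  assumes "finite Q1"
    and "is_QP Q1 src tgt S"
    and "reduced S"
    and "rigid Q1 src tgt S"
  shows "\<forall>i j. i \<noteq> j \<longrightarrow>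
           (\<not> (\<exists>a\<in>Q1. src a = j \<and> tgt a = i)) \<or> (\<not> (\<exists>b\<in>Q1. src b = i \<and> tgt b = j))"
proof (intro allI impI, rule ccontr)
  fix i j assume ij: "i \<noteq> j"
    and "\<not> ((\<not> (\<exists>a\<in>Q1. src a = j \<and> tgt a = i)) \<or> (\<not> (\<exists>b\<in>Q1. src b = i \<and> tgt b = j)))"
  then obtain a b where a: "a \<in> Q1" "src a = j" "tgt a = i" and b: "b \<in> Q1" "src b = i" "tgt b = j"
    by blast
  have noloop: "\<forall>a\<in>Q1. src a \<noteq> tgt a" using assms(2) unfolding is_QP_def by blast
  define c1 :: "('v,'a) qpath" where "c1 = (i, [a,b])"
  define c2 :: "('v,'a) qpath" where "c2 = (j, [b,a])"
  have c12: "c1 \<noteq> c2" using ij by (simp add: c1_def c2_def)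
  have cyc1: "is_cyclic_path Q1 src tgt c1"
    using a b unfolding c1_def is_cyclic_path_def is_path_def composable_def path_tgt_def
    by (auto simp: less_Suc_eq)
  define P :: "('v,'a) qpath \<Rightarrow> 'k" where "P = pathvec c1"
  have potP: "potential Q1 src tgt P"
    using cyc1 unfolding potential_def P_def pathvec_def by auto
  obtain J where J: "J \<in> jacobian_ideal Q1 src tgt S" and ce: "cyc_equiv Q1 src tgt P J"
    using assms(4) potP unfolding rigid_def by blast
  let ?G = "{cyc_deriv Q1 src tgt \<xi> S | \<xi>. True}"
  have pt1: "path_tgt tgt (i, [a,b]) = i" using a by (simp add: path_tgt_def)
  have pt2: "path_tgt tgt (j, [b,a]) = j" using b by (simp add: path_tgt_def)
  have Gv: "\<forall>g\<in>?G. (\<forall>q. length (snd q) < 2 \<longrightarrow> g q = 0) \<and> g (v, [x, y]) = 0"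
    if "path_tgt tgt (v, [x,y]) = v" for v x y
    using deriv_vanish[OF noloop assms(3)] that by fastforce
  have J0: "J c1 = 0 \<and> J c2 = 0"
  proof -
    obtain u where u: "u \<in> ideal_gen Q1 src tgt ?G"
      and ag: "\<forall>p. length (snd p) < 3 \<longrightarrow> J p = u p"
      using J unfolding jacobian_ideal_def mclosure_def by blast
    have "u c1 = 0" unfolding c1_def by (rule ideal_vanish[OF u Gv[OF pt1] pt1])
    moreover have "u c2 = 0" unfolding c2_def by (rule ideal_vanish[OF u Gv[OF pt2] pt2])
    ultimately show ?thesis using ag by (simp add: c1_def c2_def)
  qed
  let ?X = "{(\<lambda>q. pathvec c q - pathvec (rot src c) q) | c. is_cyclic_path Q1 src tgt c}"
  have Xv: "x c1 + x c2 = 0" if xX: "x \<in> ?X" for x :: "('v,'a) qpath \<Rightarrow> 'k"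
  proof -
    obtain c where x: "x = (\<lambda>q. pathvec c q - pathvec (rot src c) q)" and cc: "is_cyclic_path Q1 src tgt c"
      using xX by blast
    obtain v xs where c: "c = (v, xs)" by (cases c)
    have r1: "rot src c = c1 \<longleftrightarrow> c = c2"
    proof
      assume h: "rot src c = c1"
      then obtain z zs where xs: "xs = z # zs" using c by (cases xs) (auto simp: c1_def)
      with h c have "zs @ [z] = [a,b]" "src z = i" by (auto simp: c1_def)
      then have "zs = [a]" "z = b" by (auto simp: append_eq_Cons_conv)
      moreover have "src (last xs) = v" using cc c xs unfolding is_cyclic_path_def is_path_def by auto
      ultimately show "c = c2" using c xs a by (simp add: c2_def)
    next
      assume "c = c2" then show "rot src c = c1" using b by (simp add: c1_def c2_def)
    qed
    have r2: "rot src c = c2 \<longleftrightarrow> c = c1"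
    proof
      assume h: "rot src c = c2"
      then obtain z zs where xs: "xs = z # zs" using c by (cases xs) (auto simp: c2_def)
      with h c have "zs @ [z] = [b,a]" "src z = j" by (auto simp: c2_def)
      then have "zs = [b]" "z = a" by (auto simp: append_eq_Cons_conv)
      moreover have "src (last xs) = v" using cc c xs unfolding is_cyclic_path_def is_path_def by auto
      ultimately show "c = c1" using c xs b by (simp add: c1_def)
    next
      assume "c = c1" then show "rot src c = c2" using a by (simp add: c1_def c2_def)
    qed
    show ?thesis unfolding x pathvec_def using r1 r2 c12
      by (cases "c = c1"; cases "c = c2") auto
  qed
  have kv: "x c1 + x c2 = 0" if "x \<in> kspan ?X" for x :: "('v,'a) qpath \<Rightarrow> 'k"
    using that
  proof induction
    case zero then show ?case by simp
  next
    case (smult y d)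
    have "y c1 + y c2 = 0" by (rule Xv) (rule smult)
    then have "d * (y c1 + y c2) = 0" by simp
    then show ?case by (simp add: distrib_left)
  next
    case (add x y) then show ?case by (simp add: algebra_simps)
  qed
  obtain z where z: "z \<in> kspan ?X" and agz: "\<forall>p. length (snd p) < 3 \<longrightarrow> P p - J p = z p"
    using ce unfolding cyc_equiv_def mclosure_def by blast
  have "z c1 + z c2 = (P c1 - J c1) + (P c2 - J c2)"
    using agz by (simp add: c1_def c2_def)
  also have "\<dots> = 1" using J0 c12 by (simp add: P_def pathvec_def)
  finally show False using kv[OF z] by simp
qed

end
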